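(* Define $P,H\in I(\mathcal{S})$ by $P(\sigma,\pi)=\binom{\pi}{\sigma}$ and $H(\sigma,\pi)=\binom{\pi}{\sigma}\eta(\sigma,\pi)$. Then $P=e^H=\sum_{\ell\ge0}H^\ell/\ell!$ (each entry being a finite sum).
   Context: $\mathcal{S}_n$ is the set of permutations of $[n]$ (written as words $\pi(1)\cdots\pi(n)$), and $\mathcal{S}=\bigcup_{n\ge0}\mathcal{S}_n$ (including the empty permutation); $|\pi|$ is the length. Two integer sequences $a_1\cdots a_k$, $b_1\cdots b_k$ are order-isomorphic if $a_i<a_j\iff b_i<b_j$ for all $i,j$. For $\sigma\in\mathcal{S}_k$, $\pi\in\mathcal{S}_n$, $\binom{\pi}{\sigma}$ is the number of order-preserving injections $\varphi:[k]\to[n]$ such that $\pi(\varphi(1))\cdots\pi(\varphi(k))$ is order-isomorphic to $\sigma$. $\mathcal{S}$ is partially ordered by $\sigma\le\pi$ iff $\binom{\pi}{\sigma}>0$. $I(\mathcal{S})$ is the incidence algebra over $\mathbb{Q}$: functions on pairs $(x,y)$ with $x\le y$, convolution $(FG)(x,y)=\sum_{x\le z\le y}F(x,z)G(z,y)$, identity $\delta(x,y)=[x=y]$ (Iverson bracket). $\eta(x,y)=[y\text{ covers }x]$; here $\pi$ covers $\sigma$ iff $\sigma\le\pi$ and $|\pi|=|\sigma|+1$. *)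

theory Defs
  imports Complex_Main "HOL-Library.FuncSet"
begin

definition perms :: "nat list set" where
  "perms = {xs. distinct xs \<and> set xs = {1..length xs}}"

definition order_iso :: "nat list \<Rightarrow> nat list \<Rightarrow> bool" where
  "order_iso a b \<longleftrightarrow> length a = length b \<and>
     (\<forall>i<length a. \<forall>j<length a. (a ! i < a ! j) \<longleftrightarrow> (b ! i < b ! j))"

text \<open>Pattern count binom(w, s): number of order-preserving injections
  phi : [k] -> [n] with w(phi(1))...w(phi(k)) order-isomorphic to s.
  Lists are 0-indexed, so w(j) is w ! (j - 1).\<close>
definition pcount :: "nat list \<Rightarrow> nat list \<Rightarrow> nat" where
  "pcount w s = card {phi \<in> {1..length s} \<rightarrow>\<^sub>E {1..length w}.
      strict_mono_on {1..length s} phi \<and>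
      order_iso (map (\<lambda>i. w ! (phi i - 1)) [1..<length s + 1]) s}"

definition pleq :: "nat list \<Rightarrow> nat list \<Rightarrow> bool" where
  "pleq s w \<longleftrightarrow> s \<in> perms \<and> w \<in> perms \<and> pcount w s > 0"

definition covers :: "nat list \<Rightarrow> nat list \<Rightarrow> bool" where
  "covers s w \<longleftrightarrow> pleq s w \<and> length w = length s + 1"

text \<open>Incidence algebra over Q: elements are functions on pairs, only their values
  on pairs x \<le> y matter.\<close>
definition iconv :: "(nat list \<Rightarrow> nat list \<Rightarrow> rat) \<Rightarrow> (nat list \<Rightarrow> nat list \<Rightarrow> rat)
    \<Rightarrow> nat list \<Rightarrow> nat list \<Rightarrow> rat" where
  "iconv F G x y = (\<Sum>z\<in>{z. pleq x z \<and> pleq z y}. F x z * G z y)"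

definition idelta :: "nat list \<Rightarrow> nat list \<Rightarrow> rat" where
  "idelta x y = (if x = y then 1 else 0)"

fun ipow :: "(nat list \<Rightarrow> nat list \<Rightarrow> rat) \<Rightarrow> nat \<Rightarrow> nat list \<Rightarrow> nat list \<Rightarrow> rat" where
  "ipow F 0 = idelta"
| "ipow F (Suc n) = iconv (ipow F n) F"

definition ieta :: "nat list \<Rightarrow> nat list \<Rightarrow> rat" where
  "ieta x y = (if covers x y then 1 else 0)"

definition Pfun :: "nat list \<Rightarrow> nat list \<Rightarrow> rat" where
  "Pfun s w = of_nat (pcount w s)"

definition Hfun :: "nat list \<Rightarrow> nat list \<Rightarrow> rat" where
  "Hfun s w = of_nat (pcount w s) * ieta s w"

end

theory Submission
  imports Defs
begin

declare upt_Suc[simp del]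

definition sub :: "nat list \<Rightarrow> nat set \<Rightarrow> nat list" where
  "sub w C = map ((!) w) (sorted_list_of_set C)"

lemma order_iso_refl: "order_iso a a"
  by (simp add: order_iso_def)

lemma order_iso_sym: "order_iso a b \<Longrightarrow> order_iso b a"
  by (simp add: order_iso_def)

lemma order_iso_trans: "order_iso a b \<Longrightarrow> order_iso b c \<Longrightarrow> order_iso a c"
  by (simp add: order_iso_def)

lemma order_iso_map:
  assumes "order_iso a b" "set xs \<subseteq> {..<length a}"
  shows "order_iso (map ((!) a) xs) (map ((!) b) xs)"
  using assms unfolding order_iso_def by (auto simp: subset_iff)

lemma length_sub: "finite C \<Longrightarrow> length (sub w C) = card C"
  by (simp add: sub_def)

lemma sub_invariant:
  assumes "order_iso a b" "C \<subseteq> {..<length a}"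
  shows "order_iso (sub a C) s \<longleftrightarrow> order_iso (sub b C) s"
proof -
  have f: "finite C" using assms(2) finite_subset by blast
  have "order_iso (sub a C) (sub b C)" unfolding sub_def
    using order_iso_map[OF assms(1)] assms(2) f by simp
  thus ?thesis using order_iso_sym order_iso_trans by blast
qed


definition occ :: "nat list \<Rightarrow> nat list \<Rightarrow> nat set set" where
  "occ w s = {C. C \<subseteq> {..<length w} \<and> card C = length s \<and> order_iso (sub w C) s}"

lemma sorted_phi:
  fixes phi :: "nat \<Rightarrow> nat"
  assumes "strict_mono_on {1..k} phi" "\<forall>i\<in>{1..k}. phi i \<ge> 1"
  shows "sorted_wrt (<) (map (\<lambda>i. phi i - 1) [1..<k+1])"
  unfolding sorted_wrt_iff_nth_less
proof (intro allI impI)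
  fix i j assume ij: "i < j" "j < length (map (\<lambda>i. phi i - 1) [1..<k+1])"
  have "phi (i+1) < phi (j+1)" using assms(1) ij unfolding strict_mono_on_def by auto
  moreover have "phi (i+1) \<ge> 1" using assms(2) ij by auto
  ultimately show "map (\<lambda>i. phi i - 1) [1..<k+1] ! i < map (\<lambda>i. phi i - 1) [1..<k+1] ! j"
    using ij by (simp add: nth_append diff_less_mono)
qed

lemma sorted_list_g:
  fixes phi :: "nat \<Rightarrow> nat"
  assumes "strict_mono_on {1..k} phi" "\<forall>i\<in>{1..k}. phi i \<ge> 1"
  shows "sorted_list_of_set ((\<lambda>i. phi i - 1) ` {1..k}) = map (\<lambda>i. phi i - 1) [1..<k+1]"
proof -
  let ?l = "map (\<lambda>i. phi i - 1) [1..<k+1]"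
  have s: "sorted_wrt (<) ?l" by (rule sorted_phi[OF assms])
  have st: "set ?l = (\<lambda>i. phi i - 1) ` {1..k}" by auto
  have "distinct ?l" using s strict_sorted_iff by blast
  hence "length ?l = card (set ?l)" by (metis distinct_card)
  thus ?thesis using s st sorted_list_of_set_unique[of "set ?l" ?l] by simp
qed

lemma pcount_occ: "pcount w s = card (occ w s)"
proof -
  let ?k = "length s" and ?n = "length w"
  let ?P = "{phi \<in> {1..?k} \<rightarrow>\<^sub>E {1..?n}. strict_mono_on {1..?k} phi \<and>
      order_iso (map (\<lambda>i. w ! (phi i - 1)) [1..<?k + 1]) s}"
  let ?g = "\<lambda>phi. (\<lambda>i. phi i - 1) ` {1..?k}"
  have key: "sub w (?g phi) = map (\<lambda>i. w ! (phi i - 1)) [1..<?k + 1]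
     \<and> ?g phi \<subseteq> {..<?n} \<and> card (?g phi) = ?k"
    if "phi \<in> ?P" for phi
  proof -
    have sm: "strict_mono_on {1..?k} phi" and ge: "\<forall>i\<in>{1..?k}. phi i \<ge> 1"
      and le: "\<forall>i\<in>{1..?k}. phi i \<le> ?n" using that by (auto simp: PiE_def Pi_def)
    have L: "sorted_list_of_set (?g phi) = map (\<lambda>i. phi i - 1) [1..<?k+1]"
      by (rule sorted_list_g[OF sm ge])
    have "card (?g phi) = length (sorted_list_of_set (?g phi))" by simp
    also have "\<dots> = ?k" using L by simp
    moreover have "?g phi \<subseteq> {..<?n}"
    proof
      fix x assume "x \<in> ?g phi"
      then obtain i where "i \<in> {1..?k}" "x = phi i - 1" by blast
      thus "x \<in> {..<?n}" using le ge by fastforce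
    qed
    moreover have "sub w (?g phi) = map (\<lambda>i. w ! (phi i - 1)) [1..<?k + 1]"
      using L by (simp add: sub_def)
    ultimately show ?thesis by simp
  qed
  have inj: "inj_on ?g ?P"
  proof (rule inj_onI)
    fix phi psi assume a: "phi \<in> ?P" "psi \<in> ?P" "?g phi = ?g psi"
    have L1: "sorted_list_of_set (?g phi) = map (\<lambda>i. phi i - 1) [1..<?k+1]"
      using a(1) by (intro sorted_list_g) (auto simp: PiE_def Pi_def)
    have L2: "sorted_list_of_set (?g psi) = map (\<lambda>i. psi i - 1) [1..<?k+1]"
      using a(2) by (intro sorted_list_g) (auto simp: PiE_def Pi_def)
    have eq: "map (\<lambda>i. phi i - 1) [1..<?k+1] = map (\<lambda>i. psi i - 1) [1..<?k+1]"
      using L1 L2 a(3) by metis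
    show "phi = psi"
    proof
      fix i show "phi i = psi i"
      proof (cases "i \<in> {1..?k}")
        case True
        have i1: "i - 1 < ?k" "Suc (i - 1) = i" using True by auto
        from eq have "\<forall>x\<in>{1..<?k+1}. phi x - 1 = psi x - 1" by simp
        hence "phi i - 1 = psi i - 1" using True by auto
        moreover have "phi i \<ge> 1" "psi i \<ge> 1" using a True by (auto simp: PiE_def Pi_def)
        ultimately show ?thesis by simp
      next
        case False
        have "phi \<in> {1..?k} \<rightarrow>\<^sub>E {1..?n}" "psi \<in> {1..?k} \<rightarrow>\<^sub>E {1..?n}" using a by auto
        thus ?thesis using False PiE_arb by metis
      qed
    qed
  qed
  have img: "?g ` ?P = occ w s"
  proof
    show "?g ` ?P \<subseteq> occ w s"
    proof
      fix C assume "C \<in> ?g ` ?P"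
      then obtain phi where p: "phi \<in> ?P" "C = ?g phi" by blast
      have "order_iso (map (\<lambda>i. w ! (phi i - 1)) [1..<?k + 1]) s" using p(1) by blast
      thus "C \<in> occ w s" using key[OF p(1)] p(2) unfolding occ_def by simp
    qed
  next
    show "occ w s \<subseteq> ?g ` ?P"
    proof
      fix C assume C: "C \<in> occ w s"
      have fin: "finite C" using C finite_subset unfolding occ_def by blast
      define L where "L = sorted_list_of_set C"
      have lenL: "length L = ?k" using C fin by (simp add: L_def occ_def)
      have sL: "sorted_wrt (<) L" by (simp add: L_def)
      have setL: "set L = C" using fin by (simp add: L_def)
      define phi where "phi = (\<lambda>i. if i \<in> {1..?k} then L ! (i - 1) + 1 else undefined)"
      have Lin: "L ! (i - 1) < ?n" if "i \<in> {1..?k}" for i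
      proof -
        have "L ! (i - 1) \<in> C" using setL lenL that by auto
        thus ?thesis using C by (auto simp: occ_def)
      qed
      have phiP: "phi \<in> {1..?k} \<rightarrow>\<^sub>E {1..?n}" using Lin by (auto simp: phi_def Suc_le_eq)
      have smo: "strict_mono_on {1..?k} phi"
      proof (rule strict_mono_onI)
        fix r t assume rt: "r \<in> {1..?k}" "t \<in> {1..?k}" "r < t"
        have "L ! (r - 1) < L ! (t - 1)" using rt lenL by (intro sorted_wrt_nth_less[OF sL]) auto
        thus "phi r < phi t" using rt by (simp add: phi_def)
      qed
      have gC: "?g phi = C"
      proof -
        have "?g phi = (\<lambda>i. L ! (i - 1)) ` {1..?k}" by (auto simp: phi_def)
        also have "\<dots> = (\<lambda>i. L ! i) ` {..<?k}"
        proof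
          show "(\<lambda>i. L ! (i - 1)) ` {1..?k} \<subseteq> (!) L ` {..<?k}"
          proof
            fix x assume "x \<in> (\<lambda>i. L ! (i - 1)) ` {1..?k}"
            then obtain i where "i \<in> {1..?k}" "x = L ! (i - 1)" by auto
            thus "x \<in> (!) L ` {..<?k}" by (intro image_eqI[of _ _ "i-1"]) auto
          qed
          show "(!) L ` {..<?k} \<subseteq> (\<lambda>i. L ! (i - 1)) ` {1..?k}"
          proof
            fix x assume "x \<in> (!) L ` {..<?k}"
            then obtain i where "i < ?k" "x = L ! i" by auto
            thus "x \<in> (\<lambda>i. L ! (i - 1)) ` {1..?k}" by (intro image_eqI[of _ _ "i+1"]) auto
          qed
        qed
        also have "\<dots> = set L" using lenL by (auto simp: set_conv_nth)
        finally show ?thesis using setL by simp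
      qed
      have "phi \<in> ?P"
      proof -
        have "sub w (?g phi) = map (\<lambda>i. w ! (phi i - 1)) [1..<?k + 1]"
          unfolding gC sub_def L_def[symmetric]
          by (rule nth_equalityI) (auto simp: lenL phi_def nth_append)
        hence "order_iso (map (\<lambda>i. w ! (phi i - 1)) [1..<?k + 1]) s"
          using C gC by (simp add: occ_def)
        thus ?thesis using phiP smo by blast
      qed
      thus "C \<in> ?g ` ?P" using gC by blast
    qed
  qed
  show ?thesis unfolding pcount_def using card_image[OF inj] img by simp
qed


lemma occ_finite: "finite (occ w s)"
proof -
  have "occ w s \<subseteq> Pow {..<length w}" by (auto simp: occ_def)
  thus ?thesis by (rule finite_subset) simp
qed

lemma pcount_too_long: "length s > length w \<Longrightarrow> pcount w s = 0"
proof -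
  assume a: "length s > length w"
  have "occ w s = {}"
  proof (rule ccontr)
    assume "occ w s \<noteq> {}"
    then obtain C where "C \<subseteq> {..<length w}" "card C = length s" by (auto simp: occ_def)
    hence "length s \<le> length w" by (metis card_lessThan card_mono finite_lessThan)
    thus False using a by simp
  qed
  thus ?thesis by (simp add: pcount_occ)
qed

lemma pcount_pos_len: "pcount w s > 0 \<Longrightarrow> length s \<le> length w"
  using pcount_too_long by (metis less_irrefl not_le)

lemma pcount_invariant:
  assumes "order_iso a b" shows "pcount a s = pcount b s"
proof -
  have l: "length a = length b" using assms by (simp add: order_iso_def)
  have "occ a s = occ b s"
    unfolding occ_def using sub_invariant[OF assms] l by auto
  thus ?thesis by (simp add: pcount_occ)
qed

lemma sub_full: "sub w {..<length w} = w"
  by (simp add: sub_def lessThan_atLeast0 map_nth)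

lemma occ_same_len:
  assumes "length s = length w"
  shows "occ w s = (if order_iso w s then {{..<length w}} else {})"
proof -
  have "C \<in> occ w s \<longleftrightarrow> C = {..<length w} \<and> order_iso w s" for C
  proof
    assume "C \<in> occ w s"
    hence C: "C \<subseteq> {..<length w}" "card C = length w" "order_iso (sub w C) s"
      using assms by (auto simp: occ_def)
    hence "C = {..<length w}" by (intro card_subset_eq) auto
    thus "C = {..<length w} \<and> order_iso w s" using C sub_full by simp
  next
    assume "C = {..<length w} \<and> order_iso w s"
    thus "C \<in> occ w s" using assms sub_full by (auto simp: occ_def)
  qed
  thus ?thesis by auto
qed

lemma perm_rank:
  assumes "z \<in> perms" "i < length z"
  shows "z ! i = card {j. j < length z \<and> z ! j \<le> z ! i}"
proof -
  have d: "distinct z" and st: "set z = {1..length z}" using assms(1) by (auto simp: perms_def)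
  have "{j. j < length z \<and> z ! j \<le> z ! i} = {j. j < length z \<and> z ! j \<in> {1..z!i}}"
    using st nth_mem by fastforce
  have bij: "bij_betw ((!) z) {j. j < length z \<and> z ! j \<le> z ! i} {1..z ! i}"
  proof (rule bij_betw_imageI)
    show "inj_on ((!) z) {j. j < length z \<and> z ! j \<le> z ! i}"
      using d by (auto simp: inj_on_def nth_eq_iff_index_eq)
    show "(!) z ` {j. j < length z \<and> z ! j \<le> z ! i} = {1..z ! i}"
    proof
      show "(!) z ` {j. j < length z \<and> z ! j \<le> z ! i} \<subseteq> {1..z ! i}"
        using st nth_mem by fastforce
      show "{1..z ! i} \<subseteq> (!) z ` {j. j < length z \<and> z ! j \<le> z ! i}"
      proof
        fix v assume v: "v \<in> {1..z ! i}"
        have "z ! i \<in> {1..length z}" using st assms(2) nth_mem by blast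
        hence "v \<in> set z" using v st by auto
        then obtain j where "j < length z" "z ! j = v" by (auto simp: in_set_conv_nth)
        thus "v \<in> (!) z ` {j. j < length z \<and> z ! j \<le> z ! i}" using v by force
      qed
    qed
  qed
  show ?thesis using bij_betw_same_card[OF bij] by simp
qed

lemma perm_unique:
  assumes "z \<in> perms" "z' \<in> perms" "order_iso z z'"
  shows "z = z'"
proof (rule nth_equalityI)
  show l: "length z = length z'" using assms(3) by (simp add: order_iso_def)
  fix i assume i: "i < length z"
  have "{j. j < length z \<and> z ! j \<le> z ! i} = {j. j < length z' \<and> z' ! j \<le> z' ! i}"
    using assms(3) i l unfolding order_iso_def by (auto simp: not_less[symmetric])
  thus "z ! i = z' ! i" using perm_rank[OF assms(1) i] perm_rank[OF assms(2)] i l by simp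
qed

definition stdz :: "nat list \<Rightarrow> nat list" where
  "stdz xs = map (\<lambda>x. card {y \<in> set xs. y \<le> x}) xs"

lemma stdz_mono:
  fixes xs :: "nat list"
  assumes "x \<in> set xs" "y \<in> set xs" "x < y"
  shows "card {u \<in> set xs. u \<le> x} < card {u \<in> set xs. u \<le> y}"
proof (rule psubset_card_mono)
  show "{u \<in> set xs. u \<le> x} \<subset> {u \<in> set xs. u \<le> y}"
  proof
    show "{u \<in> set xs. u \<le> x} \<subseteq> {u \<in> set xs. u \<le> y}" using assms by auto
    have "y \<in> {u \<in> set xs. u \<le> y}" "y \<notin> {u \<in> set xs. u \<le> x}" using assms by auto
    thus "{u \<in> set xs. u \<le> x} \<noteq> {u \<in> set xs. u \<le> y}" by blast
  qed
qed simp

lemma stdz_mono2: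
  fixes xs :: "nat list"
  assumes "x \<le> y"
  shows "card {u \<in> set xs. u \<le> x} \<le> card {u \<in> set xs. u \<le> y}"
  by (rule card_mono) (use assms in auto)

lemma stdz_perm:
  assumes "distinct xs"
  shows "stdz xs \<in> perms" "order_iso xs (stdz xs)"
proof -
  show oi: "order_iso xs (stdz xs)"
    unfolding order_iso_def
  proof (intro conjI allI impI)
    show "length xs = length (stdz xs)" by (simp add: stdz_def)
    fix i j assume ij: "i < length xs" "j < length xs"
    show "(xs ! i < xs ! j) = (stdz xs ! i < stdz xs ! j)"
    proof
      assume "xs ! i < xs ! j"
      thus "stdz xs ! i < stdz xs ! j" using ij stdz_mono[of "xs!i" xs "xs!j"] by (simp add: stdz_def)
    next
      assume a: "stdz xs ! i < stdz xs ! j"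
      show "xs ! i < xs ! j"
      proof (rule ccontr)
        assume "\<not> xs ! i < xs ! j"
        hence "xs ! j \<le> xs ! i" by simp
        thus False using a ij stdz_mono2[of "xs!j" "xs!i" xs] by (simp add: stdz_def)
      qed
    qed
  qed
  have dd: "distinct (stdz xs)"
    unfolding stdz_def distinct_map
  proof
    show "distinct xs" by fact
    show "inj_on (\<lambda>x. card {y \<in> set xs. y \<le> x}) (set xs)"
    proof (rule inj_onI)
      fix x y assume "x \<in> set xs" "y \<in> set xs" "card {u \<in> set xs. u \<le> x} = card {u \<in> set xs. u \<le> y}"
      thus "x = y" using stdz_mono[of x xs y] stdz_mono[of y xs x] by (metis less_irrefl linorder_neqE)
    qed
  qed
  have sub: "set (stdz xs) \<subseteq> {1..length xs}"
  proof
    fix v assume "v \<in> set (stdz xs)"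
    then obtain x where x: "x \<in> set xs" "v = card {y \<in> set xs. y \<le> x}" by (auto simp: stdz_def)
    have "card {y \<in> set xs. y \<le> x} \<le> card (set xs)" by (rule card_mono) auto
    also have "\<dots> = length xs" using assms by (simp add: distinct_card)
    finally have "v \<le> length xs" using x by simp
    moreover have "v \<ge> 1" using x by (simp add: Suc_le_eq card_gt_0_iff) blast
    ultimately show "v \<in> {1..length xs}" by simp
  qed
  have "card (set (stdz xs)) = length (stdz xs)" using dd by (rule distinct_card)
  hence "card (set (stdz xs)) = length xs" by (simp add: stdz_def)
  hence "set (stdz xs) = {1..length xs}" using sub by (intro card_subset_eq) auto
  thus "stdz xs \<in> perms" using dd by (simp add: perms_def stdz_def)
qed

lemma card_std_set:
  assumes "distinct xs"
  shows "card {z \<in> perms. order_iso xs z} = 1"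
proof -
  have "{z \<in> perms. order_iso xs z} = {stdz xs}"
    using stdz_perm[OF assms] perm_unique order_iso_sym order_iso_trans by blast
  thus ?thesis by simp
qed


lemma sorted_list_image:
  assumes "finite A" "B \<subseteq> {..<card A}"
  shows "sorted_list_of_set ((!) (sorted_list_of_set A) ` B) =
         map ((!) (sorted_list_of_set A)) (sorted_list_of_set B)"
proof -
  let ?LA = "sorted_list_of_set A" and ?LB = "sorted_list_of_set B"
  have fB: "finite B" using assms(2) finite_subset by blast
  have sLA: "sorted_wrt (<) ?LA" by simp
  have lenA: "length ?LA = card A" by simp
  have sLB: "sorted_wrt (<) ?LB" by simp
  have setB: "set ?LB = B" using fB by simp
  have s: "sorted_wrt (<) (map ((!) ?LA) ?LB)"
    unfolding sorted_wrt_map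
  proof (rule sorted_wrt_mono_rel[OF _ sLB])
    fix x y assume "x \<in> set ?LB" "y \<in> set ?LB" "x < y"
    thus "?LA ! x < ?LA ! y" using setB assms(2) lenA by (intro sorted_wrt_nth_less[OF sLA]) auto
  qed
  have st: "set (map ((!) ?LA) ?LB) = (!) ?LA ` B" using setB by simp
  have "distinct (map ((!) ?LA) ?LB)" using s strict_sorted_iff by blast
  hence "length (map ((!) ?LA) ?LB) = card (set (map ((!) ?LA) ?LB))" by (metis distinct_card)
  thus ?thesis using s st sorted_list_of_set_unique[of "(!) ?LA ` B" "map ((!) ?LA) ?LB"] assms(1) fB
    by simp
qed

lemma sub_sub:
  assumes "finite A" "B \<subseteq> {..<card A}"
  shows "sub (sub w A) B = sub w ((!) (sorted_list_of_set A) ` B)"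
proof -
  have fB: "finite B" using assms(2) finite_subset by blast
  have "\<forall>i\<in>set (sorted_list_of_set B). i < length (sorted_list_of_set A)"
    using assms fB by auto
  thus ?thesis unfolding sub_def sorted_list_image[OF assms] by simp
qed

lemma pcount_sub:
  assumes "A \<subseteq> {..<length w}"
  shows "pcount (sub w A) s = card {C. C \<subseteq> A \<and> card C = length s \<and> order_iso (sub w C) s}"
proof -
  have fA: "finite A" using assms finite_subset by blast
  let ?LA = "sorted_list_of_set A"
  let ?f = "(!) ?LA"
  have bij: "bij_betw ?f {..<card A} A"
    by (rule bij_betw_nth) (use fA in auto)
  have bijP: "bij_betw (image ?f) (Pow {..<card A}) (Pow A)" by (rule bij_betw_Pow[OF bij])
  have injf: "inj_on ?f {..<card A}" using bij bij_betw_imp_inj_on by blast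
  have fimg: "?f ` {..<card A} = A" using bij bij_betw_imp_surj_on by blast
  have len: "length (sub w A) = card A" using fA by (simp add: length_sub)
  have occ_sub: "occ (sub w A) s \<subseteq> Pow {..<card A}" unfolding occ_def len by blast
  have inj: "inj_on (image ?f) (occ (sub w A) s)"
    using bij_betw_imp_inj_on[OF bijP] occ_sub inj_on_subset by blast
  have occB: "B \<in> occ (sub w A) s \<longleftrightarrow> B \<subseteq> {..<card A} \<and> card B = length s \<and> order_iso (sub w (?f ` B)) s"
    if Bs: "B \<subseteq> {..<card A}" for B
    using Bs sub_sub[OF fA Bs, of w] unfolding occ_def len by simp
  have img: "image ?f ` occ (sub w A) s = {C. C \<subseteq> A \<and> card C = length s \<and> order_iso (sub w C) s}"
  proof
    show "image ?f ` occ (sub w A) s \<subseteq> {C. C \<subseteq> A \<and> card C = length s \<and> order_iso (sub w C) s}"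
    proof
      fix C assume "C \<in> image ?f ` occ (sub w A) s"
      then obtain B where B: "B \<in> occ (sub w A) s" "C = ?f ` B" by blast
      have Bs: "B \<subseteq> {..<card A}" using B(1) occ_sub by blast
      have "C \<subseteq> A" using B(2) Bs fimg by blast
      moreover have "card C = card B" using B(2) Bs injf by (metis card_image inj_on_subset)
      ultimately show "C \<in> {C. C \<subseteq> A \<and> card C = length s \<and> order_iso (sub w C) s}"
        using B occB[OF Bs] by simp
    qed
  next
    show "{C. C \<subseteq> A \<and> card C = length s \<and> order_iso (sub w C) s} \<subseteq> image ?f ` occ (sub w A) s"
    proof
      fix C assume C: "C \<in> {C. C \<subseteq> A \<and> card C = length s \<and> order_iso (sub w C) s}"
      hence "C \<in> Pow A" by simp
      hence "C \<in> image ?f ` Pow {..<card A}" using bij_betw_imp_surj_on[OF bijP] by simp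
      then obtain B where B: "B \<in> Pow {..<card A}" "C = ?f ` B" by (rule imageE)
      have Bs: "B \<subseteq> {..<card A}" using B by simp
      have "card C = card B" using B(2) Bs injf by (metis card_image inj_on_subset)
      hence "B \<in> occ (sub w A) s"
        using C B(2) occB[OF Bs] Bs by simp
      thus "C \<in> image ?f ` occ (sub w A) s" using B by blast
    qed
  qed
  have "pcount (sub w A) s = card (occ (sub w A) s)" by (rule pcount_occ)
  also have "\<dots> = card (image ?f ` occ (sub w A) s)" using card_image[OF inj] by simp
  finally show ?thesis using img by simp
qed

lemma card_supersets:
  assumes "C \<subseteq> {..<N}" "N \<ge> 1"
  shows "card {A. A \<subseteq> {..<N} \<and> card A = N - 1 \<and> C \<subseteq> A} = N - card C"
proof -
  let ?h = "\<lambda>j. {..<N} - {j}"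
  have inj: "inj_on ?h ({..<N} - C)" by (rule inj_onI) auto
  have img: "?h ` ({..<N} - C) = {A. A \<subseteq> {..<N} \<and> card A = N - 1 \<and> C \<subseteq> A}"
  proof
    show "?h ` ({..<N} - C) \<subseteq> {A. A \<subseteq> {..<N} \<and> card A = N - 1 \<and> C \<subseteq> A}"
      using assms(1) by (auto simp: card_Diff_singleton)
    show "{A. A \<subseteq> {..<N} \<and> card A = N - 1 \<and> C \<subseteq> A} \<subseteq> ?h ` ({..<N} - C)"
    proof
      fix A assume A: "A \<in> {A. A \<subseteq> {..<N} \<and> card A = N - 1 \<and> C \<subseteq> A}"
      have As: "A \<subseteq> {..<N}" "card A = N - 1" using A by auto
      have "card ({..<N} - A) = card {..<N} - card A"
        using As(1) by (intro card_Diff_subset) (auto intro: finite_subset)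
      hence "card ({..<N} - A) = N - (N - 1)" using As(2) by simp
      hence "card ({..<N} - A) = 1" using assms(2) by simp
      then obtain j where j: "{..<N} - A = {j}" by (rule card_1_singletonE)
      have "A = ?h j"
      proof
        show "A \<subseteq> ?h j" using j As(1) by blast
        show "?h j \<subseteq> A" using j by blast
      qed
      moreover have "j \<in> {..<N} - C" using j A by blast
      ultimately show "A \<in> ?h ` ({..<N} - C)" by blast
    qed
  qed
  have "card ({..<N} - C) = card {..<N} - card C"
    using assms(1) by (intro card_Diff_subset) (auto intro: finite_subset)
  hence "card ({..<N} - C) = N - card C" by simp
  thus ?thesis using card_image[OF inj] img by simp
qed


lemma perms_le_finite: "finite {z \<in> perms. length z \<le> N}"
proof (rule finite_subset)
  show "{z \<in> perms. length z \<le> N} \<subseteq> {xs. set xs \<subseteq> {..N} \<and> length xs \<le> N}"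
    by (auto simp: perms_def)
  show "finite {xs. set xs \<subseteq> {..N} \<and> length xs \<le> N}" by (rule finite_lists_length_le) simp
qed

lemma perms_eq_finite: "finite {z \<in> perms. length z = N}"
  by (rule finite_subset[OF _ perms_le_finite[of N]]) auto

lemma distinct_sub:
  assumes "distinct w" "A \<subseteq> {..<length w}"
  shows "distinct (sub w A)"
proof -
  have fA: "finite A" using assms(2) finite_subset by blast
  have "inj_on ((!) w) (set (sorted_list_of_set A))"
    using assms fA by (intro inj_on_nth) auto
  thus ?thesis unfolding sub_def distinct_map by simp
qed

lemma sum_if_const:
  assumes "finite S"
  shows "(\<Sum>x\<in>S. if P x then (c::nat) else 0) = c * card {x \<in> S. P x}"
proof -
  have "(\<Sum>x\<in>S. if P x then c else 0) = (\<Sum>x\<in>{x \<in> S. P x}. c)"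
    using sum.inter_filter[OF assms, of "\<lambda>_. c" P] by simp
  thus ?thesis by simp
qed

lemma key_identity:
  assumes "distinct w" "length w = m + 1"
  shows "(\<Sum>z\<in>{z \<in> perms. length z = m}. pcount z s * pcount w z) = (m + 1 - length s) * pcount w s"
proof -
  let ?Pm = "{z \<in> perms. length z = m}"
  let ?Sm = "{A. A \<subseteq> {..<m+1} \<and> card A = m}"
  let ?O = "occ w s"
  have fPm: "finite ?Pm" by (rule perms_eq_finite)
  have fSm: "finite ?Sm" by (rule finite_subset[of _ "Pow {..<m+1}"]) auto
  have fO: "finite ?O" by (rule occ_finite)
  have step1: "pcount z s * pcount w z =
      (\<Sum>A\<in>?Sm. if order_iso (sub w A) z then pcount (sub w A) s else 0)" if z: "z \<in> ?Pm" for z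
  proof -
    have "occ w z = {A \<in> ?Sm. order_iso (sub w A) z}" using z assms(2) by (auto simp: occ_def)
    hence "pcount w z = card {A \<in> ?Sm. order_iso (sub w A) z}" by (simp add: pcount_occ)
    hence "pcount z s * pcount w z = (\<Sum>A\<in>?Sm. if order_iso (sub w A) z then pcount z s else 0)"
      using sum_if_const[OF fSm] by (simp add: mult.commute)
    also have "\<dots> = (\<Sum>A\<in>?Sm. if order_iso (sub w A) z then pcount (sub w A) s else 0)"
      by (rule sum.cong) (auto simp: pcount_invariant)
    finally show ?thesis .
  qed
  have step2: "(\<Sum>z\<in>?Pm. if order_iso (sub w A) z then pcount (sub w A) s else 0) = pcount (sub w A) s"
    if A: "A \<in> ?Sm" for A
  proof -
    have As: "A \<subseteq> {..<length w}" using A assms(2) by auto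
    have fA: "finite A" using A finite_subset by blast
    have "{z \<in> ?Pm. order_iso (sub w A) z} = {z \<in> perms. order_iso (sub w A) z}"
      using A length_sub[OF fA, of w] by (auto simp: order_iso_def)
    hence "card {z \<in> ?Pm. order_iso (sub w A) z} = 1"
      using card_std_set[OF distinct_sub[OF assms(1) As]] by simp
    thus ?thesis using sum_if_const[OF fPm] by simp
  qed
  have step3: "pcount (sub w A) s = (\<Sum>C\<in>?O. if C \<subseteq> A then 1 else 0)" if A: "A \<in> ?Sm" for A
  proof -
    have As: "A \<subseteq> {..<length w}" using A assms(2) by auto
    have "{C. C \<subseteq> A \<and> card C = length s \<and> order_iso (sub w C) s} = {C \<in> ?O. C \<subseteq> A}"
      using As by (auto simp: occ_def)
    thus ?thesis using pcount_sub[OF As, of s] sum_if_const[OF fO, of "\<lambda>C. C \<subseteq> A" 1] by simp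
  qed
  have step4: "(\<Sum>A\<in>?Sm. if C \<subseteq> A then 1 else 0) = m + 1 - length s" if C: "C \<in> ?O" for C
  proof -
    have Cs: "C \<subseteq> {..<m+1}" "card C = length s" using C assms(2) by (auto simp: occ_def)
    have "{A \<in> ?Sm. C \<subseteq> A} = {A. A \<subseteq> {..<m+1} \<and> card A = m + 1 - 1 \<and> C \<subseteq> A}" by auto
    hence "card {A \<in> ?Sm. C \<subseteq> A} = m + 1 - length s"
      using card_supersets[OF Cs(1)] Cs(2) by simp
    thus ?thesis using sum_if_const[OF fSm, of "\<lambda>A. C \<subseteq> A" 1] by simp
  qed
  have "(\<Sum>z\<in>?Pm. pcount z s * pcount w z) =
      (\<Sum>z\<in>?Pm. \<Sum>A\<in>?Sm. if order_iso (sub w A) z then pcount (sub w A) s else 0)"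
    using step1 by (rule sum.cong[OF refl])
  also have "\<dots> = (\<Sum>A\<in>?Sm. \<Sum>z\<in>?Pm. if order_iso (sub w A) z then pcount (sub w A) s else 0)"
    by (rule sum.swap)
  also have "\<dots> = (\<Sum>A\<in>?Sm. pcount (sub w A) s)"
    using step2 by (rule sum.cong[OF refl])
  also have "\<dots> = (\<Sum>A\<in>?Sm. \<Sum>C\<in>?O. if C \<subseteq> A then 1 else 0)"
    using step3 by (rule sum.cong[OF refl])
  also have "\<dots> = (\<Sum>C\<in>?O. \<Sum>A\<in>?Sm. if C \<subseteq> A then 1 else 0)"
    by (rule sum.swap)
  also have "\<dots> = (\<Sum>C\<in>?O. m + 1 - length s)"
    using step4 by (rule sum.cong[OF refl])
  also have "\<dots> = (m + 1 - length s) * pcount w s" by (simp add: pcount_occ)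
  finally show ?thesis .
qed


lemma pcount_self: "pcount w w = 1"
  using occ_same_len[of w w] order_iso_refl by (simp add: pcount_occ)

lemma pcount_same_len_perm:
  assumes "s \<in> perms" "w \<in> perms" "length s = length w" "s \<noteq> w"
  shows "pcount w s = 0"
proof -
  have "\<not> order_iso w s" using perm_unique[OF assms(2,1)] assms(4) by metis
  thus ?thesis using occ_same_len[OF assms(3)] by (simp add: pcount_occ)
qed

lemma ipow_formula:
  assumes "s \<in> perms" "w \<in> perms"
  shows "ipow Hfun l s w = (if length w = length s + l then fact l * of_nat (pcount w s) else 0)"
  using assms(2)
proof (induction l arbitrary: w)
  case 0
  show ?case
  proof (cases "s = w")
    case True thus ?thesis by (simp add: idelta_def pcount_self)
  next
    case False
    thus ?thesis using pcount_same_len_perm[OF assms(1) 0] by (auto simp: idelta_def)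
  qed
next
  case (Suc l)
  let ?Z = "{z. pleq s z \<and> pleq z w}"
  let ?m = "length s + l"
  let ?Pm = "{z \<in> perms. length z = ?m}"
  define T where "T z = (if length z = ?m \<and> length w = length z + 1
      then fact l * of_nat (pcount z s * pcount w z) else (0::rat))" for z
  have fZ: "finite ?Z"
  proof (rule finite_subset[OF _ perms_le_finite[of "length w"]])
    show "?Z \<subseteq> {z \<in> perms. length z \<le> length w}"
      using pcount_pos_len by (auto simp: pleq_def)
  qed
  have termZ: "ipow Hfun l s z * Hfun z w = T z" if z: "z \<in> ?Z" for z
  proof -
    have zp: "z \<in> perms" "pleq z w" using z by (auto simp: pleq_def)
    have "covers z w \<longleftrightarrow> length w = length z + 1" using zp(2) by (simp add: covers_def)
    hence h: "Hfun z w = of_nat (pcount w z) * (if length w = length z + 1 then 1 else 0)"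
      by (simp add: Hfun_def ieta_def)
    show ?thesis unfolding h Suc.IH[OF zp(1)] T_def by simp
  qed
  have "ipow Hfun (Suc l) s w = (\<Sum>z\<in>?Z. ipow Hfun l s z * Hfun z w)"
    by (simp add: iconv_def)
  also have "\<dots> = (\<Sum>z\<in>?Z. T z)" using termZ by (rule sum.cong[OF refl])
  finally have eq1: "ipow Hfun (Suc l) s w = (\<Sum>z\<in>?Z. T z)" .
  show ?case
  proof (cases "length w = length s + Suc l")
    case False
    hence "T z = 0" for z by (auto simp: T_def)
    thus ?thesis using eq1 False by simp
  next
    case True
    have "(\<Sum>z\<in>?Z. T z) = (\<Sum>z\<in>?Z \<inter> ?Pm. T z)"
      by (rule sum.mono_neutral_right[OF fZ]) (auto simp: T_def pleq_def)
    also have "\<dots> = (\<Sum>z\<in>?Pm. T z)"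
    proof (rule sum.mono_neutral_left[OF perms_eq_finite])
      show "?Z \<inter> ?Pm \<subseteq> ?Pm" by blast
      show "\<forall>z\<in>?Pm - ?Z \<inter> ?Pm. T z = 0"
        using assms(1) Suc.prems by (auto simp: T_def pleq_def)
    qed
    also have "\<dots> = (\<Sum>z\<in>?Pm. fact l * of_nat (pcount z s * pcount w z))"
      by (rule sum.cong[OF refl]) (use True in \<open>auto simp: T_def\<close>)
    also have "\<dots> = fact l * of_nat (\<Sum>z\<in>?Pm. pcount z s * pcount w z)"
      by (simp add: sum_distrib_left)
    also have "(\<Sum>z\<in>?Pm. pcount z s * pcount w z) = (?m + 1 - length s) * pcount w s"
      by (rule key_identity) (use Suc.prems True in \<open>auto simp: perms_def\<close>)
    also have "fact l * of_nat ((?m + 1 - length s) * pcount w s) = (fact (Suc l) * of_nat (pcount w s) :: rat)"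
      by (simp add: algebra_simps)
    finally show ?thesis using eq1 True by simp
  qed
qed

theorem mainTheorem4:
  assumes "pleq s w"
  shows "finite {l. ipow Hfun l s w \<noteq> 0} \<and>
         Pfun s w = (\<Sum>l\<in>{l. ipow Hfun l s w \<noteq> 0}. ipow Hfun l s w / fact l)"
proof -
  have sp: "s \<in> perms" "w \<in> perms" "pcount w s > 0" using assms by (auto simp: pleq_def)
  have le: "length s \<le> length w" using pcount_pos_len[OF sp(3)] .
  define L where "L = length w - length s"
  have set: "{l. ipow Hfun l s w \<noteq> 0} = {L}"
    using ipow_formula[OF sp(1,2)] sp(3) le by (auto simp: L_def)
  have "ipow Hfun L s w = fact L * of_nat (pcount w s)"
    using ipow_formula[OF sp(1,2), of L] le by (simp add: L_def)
  thus ?thesis using set by (simp add: Pfun_def)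
qed

end
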